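(* Let $p\in\mathbb N$. For each $n \in \mathbb N$ and $q \in \{0,1,\dots,\lfloor pn/(p+1)\rfloor\}$, $$\sum_{\mathbf m \in S_{n,q,p}} \pi_{\mathbf m} = \sum_{\substack{\mathbf k=(k_1,\dots,k_{p+1})\in\{0,1,2,\dots\}^{p+1}\\ \sum_{j=1}^{p+1} j k_j = n,\ \sum_{j=1}^{p+1} k_j = n-q}} \frac{1}{k_1!\,k_2!\cdots k_{p+1}!\; 2^{k_2}\cdots (p+1)^{k_{p+1}}}.$$
   Context: $S_{n,q,p} = \{\mathbf m=(m_1,\dots,m_{n-q}) \in \{0,1,\dots,p\}^{n-q} : m_1+\cdots+m_{n-q}=q\}$, and $\pi_{\mathbf m} = \prod_{i=1}^{n-q}[m_i+\cdots+m_{n-q} + (n-q-i+1)]^{-1}$. *)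

theory Defs
  imports "HOL-Library.FuncSet" Complex_Main
begin

definition S_set :: "nat \<Rightarrow> nat \<Rightarrow> nat \<Rightarrow> (nat \<Rightarrow> nat) set" where
  "S_set n q p = {m \<in> {1..n-q} \<rightarrow>\<^sub>E {0..p}. (\<Sum>i=1..n-q. m i) = q}"

definition pi_weight :: "nat \<Rightarrow> nat \<Rightarrow> (nat \<Rightarrow> nat) \<Rightarrow> real" where
  "pi_weight n q m = (\<Prod>i=1..n-q. 1 / real ((\<Sum>j=i..n-q. m j) + (n - q - i + 1)))"

definition K_set :: "nat \<Rightarrow> nat \<Rightarrow> nat \<Rightarrow> (nat \<Rightarrow> nat) set" where
  "K_set n q p = {k \<in> {1..p+1} \<rightarrow>\<^sub>E (UNIV :: nat set).
      (\<Sum>j=1..p+1. j * k j) = n \<and> (\<Sum>j=1..p+1. k j) = n - q}"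

end

theory Submission
  imports Defs
begin
definition cons_f :: "nat \<Rightarrow> nat \<Rightarrow> (nat \<Rightarrow> nat) \<Rightarrow> nat \<Rightarrow> nat" where
  "cons_f N a m = (\<lambda>i. if i = 1 then a else if 2 \<le> i \<and> i \<le> Suc N then m (i - 1) else undefined)"
definition tl_f :: "nat \<Rightarrow> (nat \<Rightarrow> nat) \<Rightarrow> nat \<Rightarrow> nat" where
  "tl_f N m = (\<lambda>i. if 1 \<le> i \<and> i \<le> N then m (Suc i) else undefined)"

lemma cons_bij:
  "bij_betw (\<lambda>(a,m). cons_f N a m) (B \<times> ({1..N} \<rightarrow>\<^sub>E B)) ({1..Suc N} \<rightarrow>\<^sub>E B)"
proof (rule bij_betw_byWitness[where f' = "\<lambda>m. (m 1, tl_f N m)"])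
  show "\<forall>x\<in>B \<times> ({1..N} \<rightarrow>\<^sub>E B). (\<lambda>m. (m 1, tl_f N m)) ((\<lambda>(a,m). cons_f N a m) x) = x"
  proof
    fix x assume x: "x \<in> B \<times> ({1..N} \<rightarrow>\<^sub>E B)"
    obtain a m where xe: "x = (a,m)" by (cases x)
    have m: "m \<in> {1..N} \<rightarrow>\<^sub>E B" using x xe by simp
    have "tl_f N (cons_f N a m) = m"
    proof
      fix i show "tl_f N (cons_f N a m) i = m i"
      proof (cases "1 \<le> i \<and> i \<le> N")
        case True then show ?thesis by (simp add: tl_f_def cons_f_def)
      next
        case False then show ?thesis using PiE_arb[OF m, of i] by (auto simp: tl_f_def)
      qed
    qed
    then show "(\<lambda>m. (m 1, tl_f N m)) ((\<lambda>(a,m). cons_f N a m) x) = x"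
      by (simp add: xe cons_f_def)
  qed
  show "\<forall>y\<in>{1..Suc N} \<rightarrow>\<^sub>E B. (\<lambda>(a,m). cons_f N a m) ((\<lambda>m. (m 1, tl_f N m)) y) = y"
  proof
    fix y assume y: "y \<in> {1..Suc N} \<rightarrow>\<^sub>E B"
    show "(\<lambda>(a,m). cons_f N a m) ((\<lambda>m. (m 1, tl_f N m)) y) = y"
    proof
      fix i show "(\<lambda>(a,m). cons_f N a m) ((\<lambda>m. (m 1, tl_f N m)) y) i = y i"
      proof (cases "i = 1")
        case True then show ?thesis by (simp add: cons_f_def)
      next
        case F: False
        show ?thesis
        proof (cases "2 \<le> i \<and> i \<le> Suc N")
          case True then show ?thesis using F by (auto simp: cons_f_def tl_f_def)
        next
          case False then show ?thesis using F PiE_arb[OF y, of i] by (auto simp: cons_f_def)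
        qed
      qed
    qed
  qed
  show "(\<lambda>(a,m). cons_f N a m) ` (B \<times> ({1..N} \<rightarrow>\<^sub>E B)) \<subseteq> {1..Suc N} \<rightarrow>\<^sub>E B"
  proof (rule subsetI)
    fix y assume "y \<in> (\<lambda>(a,m). cons_f N a m) ` (B \<times> ({1..N} \<rightarrow>\<^sub>E B))"
    then obtain a m where y: "y = cons_f N a m" "a \<in> B" "m \<in> {1..N} \<rightarrow>\<^sub>E B" by auto
    have "\<forall>i\<in>{1..Suc N}. y i \<in> B"
    proof
      fix i assume i: "i \<in> {1..Suc N}"
      show "y i \<in> B"
      proof (cases "i = 1")
        case True then show ?thesis using y by (simp add: cons_f_def)
      next
        case False
        then have "i - 1 \<in> {1..N}" using i by auto
        then have "m (i - 1) \<in> B" using y(3) by auto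
        then show ?thesis using False i y(1) by (auto simp: cons_f_def)
      qed
    qed
    moreover have "\<forall>x. x \<notin> {1..Suc N} \<longrightarrow> y x = undefined" by (auto simp: y cons_f_def)
    ultimately show "y \<in> {1..Suc N} \<rightarrow>\<^sub>E B" by (auto simp: PiE_iff extensional_def)
  qed
  show "(\<lambda>m. (m 1, tl_f N m)) ` ({1..Suc N} \<rightarrow>\<^sub>E B) \<subseteq> B \<times> ({1..N} \<rightarrow>\<^sub>E B)"
    by (auto simp: tl_f_def PiE_iff extensional_def)
qed
lemma sum_PiE_Suc:
  "(\<Sum>m\<in>{1..Suc N} \<rightarrow>\<^sub>E B. f m) = (\<Sum>a\<in>B. \<Sum>m\<in>{1..N} \<rightarrow>\<^sub>E B. f (cons_f N a m))"
proof -
  have "(\<Sum>m\<in>{1..Suc N} \<rightarrow>\<^sub>E B. f m) = (\<Sum>x\<in>B \<times> ({1..N} \<rightarrow>\<^sub>E B). f ((\<lambda>(a,m). cons_f N a m) x))"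
    by (rule sum.reindex_bij_betw[OF cons_bij, symmetric])
  also have "\<dots> = (\<Sum>a\<in>B. \<Sum>m\<in>{1..N} \<rightarrow>\<^sub>E B. f (cons_f N a m))"
    by (simp add: sum.cartesian_product split_def)
  finally show ?thesis .
qed

lemma cons_sum: "(\<Sum>i=1..Suc N. cons_f N a m i) = a + (\<Sum>i=1..N. m i)"
proof -
  have "(\<Sum>i=1..Suc N. cons_f N a m i) = cons_f N a m 1 + (\<Sum>i=Suc 1..Suc N. cons_f N a m i)"
    by (rule sum.atLeast_Suc_atMost) simp
  also have "(\<Sum>i=Suc 1..Suc N. cons_f N a m i) = (\<Sum>i=1..N. cons_f N a m (Suc i))"
    by (rule sum.shift_bounds_cl_Suc_ivl)
  also have "\<dots> = (\<Sum>i=1..N. m i)"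
    by (rule sum.cong) (auto simp: cons_f_def)
  finally show ?thesis by (simp add: cons_f_def)
qed

definition wt :: "nat \<Rightarrow> (nat \<Rightarrow> nat) \<Rightarrow> real" where
  "wt N m = (\<Prod>i=1..N. 1 / real ((\<Sum>j=i..N. m j) + (N - i + 1)))"

lemma cons_wt: "wt (Suc N) (cons_f N a m) = 1 / real (a + (\<Sum>i=1..N. m i) + Suc N) * wt N m"
proof -
  let ?g = "\<lambda>i. 1 / real ((\<Sum>j=i..Suc N. cons_f N a m j) + (Suc N - i + 1))"
  have "wt (Suc N) (cons_f N a m) = ?g 1 * (\<Prod>i=Suc 1..Suc N. ?g i)"
    unfolding wt_def by (rule prod.atLeast_Suc_atMost) simp
  also have "(\<Prod>i=Suc 1..Suc N. ?g i) = (\<Prod>i=1..N. ?g (Suc i))"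
    by (rule prod.shift_bounds_cl_Suc_ivl)
  also have "\<dots> = wt N m"
    unfolding wt_def
  proof (rule prod.cong)
    fix i assume i: "i \<in> {1..N}"
    have "(\<Sum>j=Suc i..Suc N. cons_f N a m j) = (\<Sum>j=i..N. cons_f N a m (Suc j))"
      by (rule sum.shift_bounds_cl_Suc_ivl)
    also have "\<dots> = (\<Sum>j=i..N. m j)"
      by (rule sum.cong) (use i in \<open>auto simp: cons_f_def\<close>)
    finally show "?g (Suc i) = 1 / real ((\<Sum>j=i..N. m j) + (N - i + 1))"
      using i by simp
  qed simp
  also have "?g 1 = 1 / real (a + (\<Sum>i=1..N. m i) + Suc N)"
    using cons_sum[of N a m] by simp
  finally show ?thesis .
qed


definition KK :: "nat \<Rightarrow> nat \<Rightarrow> nat \<Rightarrow> (nat \<Rightarrow> nat) set" where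
  "KK p n M = {k \<in> {1..p+1} \<rightarrow>\<^sub>E (UNIV :: nat set).
      (\<Sum>j=1..p+1. j * k j) = n \<and> (\<Sum>j=1..p+1. k j) = M}"

definition ww :: "nat \<Rightarrow> (nat \<Rightarrow> nat) \<Rightarrow> real" where
  "ww p k = 1 / (\<Prod>j=1..p+1. fact (k j) * real j ^ (k j))"

definition GG :: "nat \<Rightarrow> nat \<Rightarrow> nat \<Rightarrow> real" where
  "GG p n M = (\<Sum>k\<in>KK p n M. ww p k)"

lemma KK_sub: "KK p n M \<subseteq> {1..p+1} \<rightarrow>\<^sub>E {0..n}"
proof
  fix k assume k: "k \<in> KK p n M"
  have "\<forall>j\<in>{1..p+1}. k j \<in> {0..n}"
  proof
    fix j :: nat assume j: "j \<in> {1..p+1}"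
    have "k j \<le> j * k j" using j by simp
    also have "\<dots> \<le> (\<Sum>j=1..p+1. j * k j)" by (rule member_le_sum) (use j in auto)
    finally show "k j \<in> {0..n}" using k by (simp add: KK_def)
  qed
  then show "k \<in> {1..p+1} \<rightarrow>\<^sub>E {0..n}" using k by (auto simp: KK_def PiE_iff)
qed

lemma KK_finite: "finite (KK p n M)"
  by (rule finite_subset[OF KK_sub]) (simp add: finite_PiE)

lemma KK_small: "n < M \<Longrightarrow> KK p n M = {}"
proof (rule ccontr)
  assume "n < M" "KK p n M \<noteq> {}"
  then obtain k where k: "k \<in> KK p n M" by blast
  have "(\<Sum>j=1..p+1. k j) \<le> (\<Sum>j=1..p+1. j * k j)" by (rule sum_mono) simp
  then show False using k \<open>n < M\<close> by (simp add: KK_def)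
qed

lemma GG_small: "n < M \<Longrightarrow> GG p n M = 0"
  by (simp add: GG_def KK_small)

lemma KK_0: "KK p n 0 = (if n = 0 then {restrict (\<lambda>_. 0) {1..p+1}} else {})"
proof -
  have "k \<in> KK p n 0 \<longleftrightarrow> n = 0 \<and> k = restrict (\<lambda>_. 0) {1..p+1}" for k
  proof
    assume k: "k \<in> KK p n 0"
    then have "sum k {1..p+1} = 0" by (simp add: KK_def)
    then have z: "\<forall>j\<in>{1..p+1}. k j = 0"
      using sum_eq_0_iff[OF finite_atLeastAtMost, of k 1 "p+1"] by blast
    then have "(\<Sum>j=1..p+1. j * k j) = 0" by simp
    then have "n = 0" using k by (simp add: KK_def)
    moreover have "k = restrict (\<lambda>_. 0) {1..p+1}"
      using k z by (auto simp: KK_def PiE_iff extensional_def restrict_def)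
    ultimately show "n = 0 \<and> k = restrict (\<lambda>_. 0) {1..p+1}" by simp
  next
    assume "n = 0 \<and> k = restrict (\<lambda>_. 0) {1..p+1}"
    then show "k \<in> KK p n 0" by (simp add: KK_def)
  qed
  then show ?thesis by auto
qed

lemma GG_0: "GG p n 0 = (if n = 0 then 1 else 0)"
  by (simp add: GG_def KK_0 ww_def)

lemma ww_dec:
  assumes j: "j \<in> {1..p+1}" and c: "k j = Suc c"
  shows "real (j * k j) * ww p k = ww p (k(j := c))"
proof -
  let ?f = "\<lambda>k i. fact (k i) * real i ^ (k i) :: real"
  have r: "\<And>g::nat\<Rightarrow>real. prod g {1..p+1} = g j * prod g ({1..p+1} - {j})"
    by (rule prod.remove) (use j in auto)
  have R: "prod (?f (k(j:=c))) ({1..p+1} - {j}) = prod (?f k) ({1..p+1} - {j})"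
    by (rule prod.cong) auto
  have Rpos: "prod (?f k) ({1..p+1} - {j}) > 0"
    by (rule prod_pos) auto
  have jpos: "real j > 0" using j by auto
  have w1: "ww p k = 1 / (fact (Suc c) * real j ^ Suc c * prod (?f k) ({1..p+1} - {j}))"
    unfolding ww_def by (subst r) (simp add: c)
  have w2: "ww p (k(j := c)) = 1 / (fact c * real j ^ c * prod (?f k) ({1..p+1} - {j}))"
    unfolding ww_def by (subst r) (simp add: R)
  have aux: "\<And>a b F J R::real. a>0 \<Longrightarrow> b>0 \<Longrightarrow> F>0 \<Longrightarrow> J>0 \<Longrightarrow> R>0 \<Longrightarrow>
      (b*a) * (1/((a*F)*(b*J)*R)) = 1/(F*J*R)"
    by (simp add: field_simps)
  have "real (j * k j) * ww p k = (real j * real (Suc c)) *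
     (1 / ((real (Suc c) * fact c) * (real j * real j ^ c) * prod (?f k) ({1..p+1} - {j})))"
    using w1 by (simp only: c fact_Suc power_Suc of_nat_mult)
  also have "\<dots> = 1 / (fact c * real j ^ c * prod (?f k) ({1..p+1} - {j}))"
    by (rule aux) (use Rpos jpos in auto)
  finally show ?thesis using w2 by simp
qed


lemma upd_sums:
  fixes p j c :: nat and k :: "nat \<Rightarrow> nat"
  assumes j: "j \<in> {1..p+1}"
  shows "(\<Sum>i=1..p+1. i * (k(j:=c)) i) + j * k j = (\<Sum>i=1..p+1. i * k i) + j * c"
    and "(\<Sum>i=1..p+1. (k(j:=c)) i) + k j = (\<Sum>i=1..p+1. k i) + c"
proof -
  have rem: "\<And>h::nat\<Rightarrow>nat. sum h {1..p+1} = h j + sum h ({1..p+1} - {j})"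
    by (rule sum.remove) (use j in auto)
  have a: "(\<Sum>i\<in>{1..p+1} - {j}. i * (k(j:=c)) i) = (\<Sum>i\<in>{1..p+1} - {j}. i * k i)"
    by (rule sum.cong) auto
  have b: "(\<Sum>i\<in>{1..p+1} - {j}. (k(j:=c)) i) = (\<Sum>i\<in>{1..p+1} - {j}. k i)"
    by (rule sum.cong) auto
  show "(\<Sum>i=1..p+1. i * (k(j:=c)) i) + j * k j = (\<Sum>i=1..p+1. i * k i) + j * c"
    using rem[of "\<lambda>i. i * (k(j:=c)) i"] rem[of "\<lambda>i. i * k i"] a by simp
  show "(\<Sum>i=1..p+1. (k(j:=c)) i) + k j = (\<Sum>i=1..p+1. k i) + c"
    using rem[of "\<lambda>i. (k(j:=c)) i"] rem[of "\<lambda>i. k i"] b by simp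
qed

lemma upd_PiE: "j \<in> {1..p+1} \<Longrightarrow> k \<in> {1..p+1} \<rightarrow>\<^sub>E (UNIV::nat set) \<Longrightarrow> k(j:=c) \<in> {1..p+1} \<rightarrow>\<^sub>E (UNIV::nat set)"
  by (auto simp: PiE_iff extensional_def)

lemma GG_rec_j:
  assumes j: "j \<in> {1..p+1}"
  shows "(\<Sum>k\<in>KK p n (Suc M). real (j * k j) * ww p k) = (if j \<le> n then GG p (n-j) M else 0)"
proof -
  let ?F = "{k \<in> KK p n (Suc M). k j \<noteq> 0}"
  have s1: "(\<Sum>k\<in>KK p n (Suc M). real (j * k j) * ww p k) = (\<Sum>k\<in>?F. real (j * k j) * ww p k)"
    unfolding sum.inter_filter[OF KK_finite] by (rule sum.cong) auto
  show ?thesis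
  proof (cases "j \<le> n")
    case False
    have Fe: "?F = {}"
    proof (rule ccontr)
      assume "?F \<noteq> {}"
      then obtain k where k: "k \<in> KK p n (Suc M)" "k j \<noteq> 0" by blast
      have "j \<le> j * k j" using k(2) by simp
      also have "\<dots> \<le> (\<Sum>i=1..p+1. i * k i)" by (rule member_le_sum) (use j in auto)
      finally show False using k False by (simp add: KK_def)
    qed
    show ?thesis unfolding s1 Fe using False by simp
  next
    case True
    have s2: "(\<Sum>k\<in>?F. real (j * k j) * ww p k) = (\<Sum>k\<in>?F. ww p (k(j := k j - 1)))"
    proof (rule sum.cong)
      fix k assume "k \<in> ?F"
      then have "k j = Suc (k j - 1)" by simp
      then show "real (j * k j) * ww p k = ww p (k(j := k j - 1))" by (rule ww_dec[OF j])
    qed simp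
    have bij: "bij_betw (\<lambda>k. k(j := k j - 1)) ?F (KK p (n-j) M)"
    proof (rule bij_betw_byWitness[where f' = "\<lambda>k. k(j := k j + 1)"])
      show "\<forall>a\<in>?F. (a(j := a j - 1))(j := (a(j := a j - 1)) j + 1) = a" by auto
      show "\<forall>a\<in>KK p (n - j) M. (a(j := a j + 1))(j := (a(j := a j + 1)) j - 1) = a" by auto
      show "(\<lambda>k. k(j := k j - 1)) ` ?F \<subseteq> KK p (n - j) M"
      proof
        fix y assume "y \<in> (\<lambda>k. k(j := k j - 1)) ` ?F"
        then obtain k where y: "y = k(j := k j - 1)" and k: "k \<in> KK p n (Suc M)" "k j \<noteq> 0" by blast
        have e1: "(\<Sum>i=1..p+1. i * k i) = n" "(\<Sum>i=1..p+1. k i) = Suc M"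
             and kP: "k \<in> {1..p+1} \<rightarrow>\<^sub>E (UNIV::nat set)" using k by (auto simp: KK_def)
        have "j * k j = j * (k j - 1) + j" using k(2) by (cases "k j") auto
        then show "y \<in> KK p (n - j) M"
          using upd_sums[OF j, of k "k j - 1"] e1 upd_PiE[OF j kP] k(2) unfolding y KK_def by auto
      qed
      show "(\<lambda>k. k(j := k j + 1)) ` KK p (n - j) M \<subseteq> ?F"
      proof
        fix y assume "y \<in> (\<lambda>k. k(j := k j + 1)) ` KK p (n - j) M"
        then obtain k where y: "y = k(j := k j + 1)" and k: "k \<in> KK p (n-j) M" by blast
        have e1: "(\<Sum>i=1..p+1. i * k i) = n - j" "(\<Sum>i=1..p+1. k i) = M"
             and kP: "k \<in> {1..p+1} \<rightarrow>\<^sub>E (UNIV::nat set)" using k by (auto simp: KK_def)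
        show "y \<in> ?F"
          using upd_sums[OF j, of k "k j + 1"] e1 upd_PiE[OF j kP] True unfolding y KK_def
          by (auto simp: algebra_simps)
      qed
    qed
    have "(\<Sum>k\<in>?F. ww p (k(j := k j - 1))) = GG p (n-j) M"
      unfolding GG_def by (rule sum.reindex_bij_betw[OF bij])
    then show ?thesis using s1 s2 True by simp
  qed
qed

lemma GG_rec: "real n * GG p n (Suc M) = (\<Sum>j\<in>{1..p+1}. if j \<le> n then GG p (n-j) M else 0)"
proof -
  have "real n * GG p n (Suc M) = (\<Sum>k\<in>KK p n (Suc M). real n * ww p k)"
    by (simp add: GG_def sum_distrib_left)
  also have "\<dots> = (\<Sum>k\<in>KK p n (Suc M). \<Sum>j\<in>{1..p+1}. real (j * k j) * ww p k)"
  proof (rule sum.cong)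
    fix k assume k: "k \<in> KK p n (Suc M)"
    then have e: "n = (\<Sum>j\<in>{1..p+1}. j * k j)" unfolding KK_def by blast
    have "real n = real (\<Sum>j\<in>{1..p+1}. j * k j)" by (simp only: e)
    also have "\<dots> = (\<Sum>j\<in>{1..p+1}. real (j * k j))" by (rule of_nat_sum)
    finally have "real n = (\<Sum>j\<in>{1..p+1}. real (j * k j))" .
    then show "real n * ww p k = (\<Sum>j\<in>{1..p+1}. real (j * k j) * ww p k)"
      by (simp only: sum_distrib_right)
  qed simp
  also have "\<dots> = (\<Sum>j\<in>{1..p+1}. \<Sum>k\<in>KK p n (Suc M). real (j * k j) * ww p k)"
    by (rule sum.swap)
  also have "\<dots> = (\<Sum>j\<in>{1..p+1}. if j \<le> n then GG p (n-j) M else 0)"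
    by (rule sum.cong) (rule refl, rule GG_rec_j)
  finally show ?thesis .
qed

definition SS :: "nat \<Rightarrow> nat \<Rightarrow> nat \<Rightarrow> (nat \<Rightarrow> nat) set" where
  "SS p N q = {m \<in> {1..N} \<rightarrow>\<^sub>E {0..p}. (\<Sum>i=1..N. m i) = q}"

definition AA :: "nat \<Rightarrow> nat \<Rightarrow> nat \<Rightarrow> real" where
  "AA p N q = (\<Sum>m\<in>SS p N q. wt N m)"

lemma AA_alt: "AA p N q = (\<Sum>m\<in>{1..N} \<rightarrow>\<^sub>E {0..p}. if (\<Sum>i=1..N. m i) = q then wt N m else 0)"
  unfolding AA_def SS_def by (rule sum.inter_filter) (simp add: finite_PiE)

lemma AA_0: "AA p 0 q = (if q = 0 then 1 else 0)"
  by (simp add: AA_alt wt_def)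

lemma AA_Suc: "AA p (Suc N) q = (\<Sum>a\<in>{0..p}. if a \<le> q then 1 / real (q + Suc N) * AA p N (q - a) else 0)"
proof -
  have "AA p (Suc N) q = (\<Sum>a\<in>{0..p}. \<Sum>m\<in>{1..N} \<rightarrow>\<^sub>E {0..p}.
       if a + (\<Sum>i=1..N. m i) = q then 1 / real (a + (\<Sum>i=1..N. m i) + Suc N) * wt N m else 0)"
    unfolding AA_alt sum_PiE_Suc cons_sum cons_wt ..
  also have "\<dots> = (\<Sum>a\<in>{0..p}. if a \<le> q then 1 / real (q + Suc N) * AA p N (q - a) else 0)"
  proof (rule sum.cong)
    fix a assume "a \<in> {0..p}"
    show "(\<Sum>m\<in>{1..N} \<rightarrow>\<^sub>E {0..p}.
       if a + (\<Sum>i=1..N. m i) = q then 1 / real (a + (\<Sum>i=1..N. m i) + Suc N) * wt N m else 0) =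
       (if a \<le> q then 1 / real (q + Suc N) * AA p N (q - a) else 0)"
    proof (cases "a \<le> q")
      case True
      have "(\<Sum>m\<in>{1..N} \<rightarrow>\<^sub>E {0..p}.
         if a + (\<Sum>i=1..N. m i) = q then 1 / real (a + (\<Sum>i=1..N. m i) + Suc N) * wt N m else 0) =
         (\<Sum>m\<in>{1..N} \<rightarrow>\<^sub>E {0..p}. 1 / real (q + Suc N) * (if (\<Sum>i=1..N. m i) = q - a then wt N m else 0))"
        by (rule sum.cong) (use True in auto)
      also have "\<dots> = 1 / real (q + Suc N) * AA p N (q - a)"
        by (simp add: AA_alt sum_distrib_left)
      finally show ?thesis using True by simp
    next
      case False then show ?thesis by auto
    qed
  qed simp
  finally show ?thesis .
qed

lemma AA_GG: "AA p N q = GG p (N + q) N"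
proof (induction N arbitrary: q)
  case 0 then show ?case by (simp add: AA_0 GG_0)
next
  case (Suc N)
  let ?n = "Suc N + q"
  have n0: "real ?n > 0" by simp
  have "real ?n * GG p ?n (Suc N) = (\<Sum>j\<in>{Suc 0..Suc p}. if j \<le> ?n then GG p (?n-j) N else 0)"
    using GG_rec[of ?n p N] by simp
  also have "\<dots> = (\<Sum>a\<in>{0..p}. if Suc a \<le> ?n then GG p (?n - Suc a) N else 0)"
    by (rule sum.shift_bounds_cl_Suc_ivl)
  also have "\<dots> = (\<Sum>a\<in>{0..p}. if a \<le> q then AA p N (q - a) else 0)"
  proof (rule sum.cong)
    fix a assume "a \<in> {0..p}"
    show "(if Suc a \<le> ?n then GG p (?n - Suc a) N else 0) = (if a \<le> q then AA p N (q - a) else 0)"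
    proof (cases "a \<le> q")
      case True
      then have "?n - Suc a = N + (q - a)" by simp
      then show ?thesis using True Suc.IH[of "q-a"] by simp
    next
      case False
      then show ?thesis using GG_small[of "?n - Suc a" N p] by auto
    qed
  qed simp
  finally have "GG p ?n (Suc N) = 1 / real ?n * (\<Sum>a\<in>{0..p}. if a \<le> q then AA p N (q - a) else 0)"
    using n0 by (simp add: field_simps)
  also have "\<dots> = AA p (Suc N) q"
    unfolding AA_Suc sum_distrib_left by (rule sum.cong) (auto simp: add.commute)
  finally show ?case by (simp add: add.commute)
qed

theorem mainTheorem8:
  fixes p n q :: nat
  assumes "q \<le> (p * n) div (p + 1)"
  shows "(\<Sum>m\<in>S_set n q p. pi_weight n q m) =
         (\<Sum>k\<in>K_set n q p. 1 / (\<Prod>j=1..p+1. fact (k j) * real j ^ (k j)))"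
proof -
  have "(p * n) div (p + 1) \<le> ((p + 1) * n) div (p + 1)" by (rule div_le_mono) simp
  moreover have "((p + 1) * n) div (p + 1) = n" by (rule nonzero_mult_div_cancel_left) simp
  ultimately have qn: "q \<le> n" using assms by linarith
  have "(\<Sum>m\<in>S_set n q p. pi_weight n q m) = AA p (n - q) q"
    unfolding AA_def SS_def S_set_def pi_weight_def wt_def ..
  also have "\<dots> = GG p (n - q + q) (n - q)" by (rule AA_GG)
  also have "\<dots> = GG p n (n - q)" using qn by simp
  also have "\<dots> = (\<Sum>k\<in>K_set n q p. 1 / (\<Prod>j=1..p+1. fact (k j) * real j ^ (k j)))"
    unfolding GG_def KK_def K_set_def ww_def ..
  finally show ?thesis .
qed

end
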